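(* Let $A$ be an $n\times n$ irreducible nonnegative matrix with largest eigenvalue $1$ and a positive vector $w$ with $Aw=w$ and $A^Tw=w$. For $\alpha\in[0,1]$ let $A_\alpha=\alpha A+(1-\alpha)A^T$. Then for every nonempty $U\subsetneq[n]$, every $b\in\mathbb R^{|U|}$, and every $0\le\beta\le\alpha\le\frac12$, \[ \operatorname{cap}_{U,b}(A_\alpha)\le\operatorname{cap}_{U,b}(A_\beta). \]
   Context: For an irreducible nonnegative $n\times n$ matrix $B$ with PF eigenvalue $1$ and a positive vector $w$ with $Bw=w$, $B^Tw=w$, set $L=I-B$. For nonempty $U\subsetneq[n]$ and $b\in\mathbb R^{|U|}$ (indexed by $U$), there is a unique $q\in\mathbb R^n$ with $q_i=w_ib_i$ for $i\in U$ and $(Lq)_i=0$ for $i\notin U$; define the capacity $\operatorname{cap}_{U,b}(B)=\langle q,Lq\rangle$. (Each $A_\alpha$ is irreducible nonnegative with the same $w$ as left and right eigenvector for eigenvalue $1$.) *)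

theory Defs
  imports "HOL-Analysis.Analysis"
begin

definition nonneg_mat :: "real^'n^'n \<Rightarrow> bool" where
  "nonneg_mat A \<longleftrightarrow> (\<forall>i j. A$i$j \<ge> 0)"

definition irreducible_mat :: "real^'n^'n \<Rightarrow> bool" where
  "irreducible_mat A \<longleftrightarrow> (\<forall>i j. (i, j) \<in> {(k, l). A$k$l \<noteq> 0}\<^sup>*)"

definition largest_eigenvalue_one :: "real^'n^'n \<Rightarrow> bool" where
  "largest_eigenvalue_one A \<longleftrightarrow>
     (\<exists>v::real^'n. v \<noteq> 0 \<and> A *v v = v) \<and>
     (\<forall>(\<mu>::complex) (v::complex^'n). v \<noteq> 0 \<and> map_matrix complex_of_real A *v v = \<mu> *s v
        \<longrightarrow> cmod \<mu> \<le> 1)"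

definition pos_vec :: "real^'n \<Rightarrow> bool" where
  "pos_vec w \<longleftrightarrow> (\<forall>i. w$i > 0)"

text \<open>The vector b is
  indexed by U; we represent it as a function on the index type, only its values on U
  matter.  q is the unique vector with q_i = w_i b_i for i in U and (Lq)_i = 0 for i
  not in U, where L = I - B; the capacity is the inner product of q and Lq.\<close>
definition cap :: "'n set \<Rightarrow> ('n \<Rightarrow> real) \<Rightarrow> real^'n \<Rightarrow> real^'n^'n \<Rightarrow> real" where
  "cap U b w B =
     (let L = mat 1 - B;
          q = (THE q::real^'n. (\<forall>i\<in>U. q$i = w$i * b i) \<and> (\<forall>i. i \<notin> U \<longrightarrow> (L *v q)$i = 0))
      in q \<bullet> (L *v q))"

definition A_alpha :: "real \<Rightarrow> real^'n^'n \<Rightarrow> real^'n^'n" where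
  "A_alpha \<alpha> A = \<alpha> *\<^sub>R A + (1 - \<alpha>) *\<^sub>R transpose A"

end

theory Submission
  imports Defs
begin

lemma L_mult:
  fixes A :: "real^'n^'n"
  shows "(mat 1 - A_alpha a A) *v v = v - a *\<^sub>R (A *v v) - (1-a) *\<^sub>R (transpose A *v v)"
  unfolding A_alpha_def matrix_vector_mult_diff_rdistrib matrix_vector_mult_add_rdistrib
    scaleR_matrix_vector_assoc[symmetric] by simp

lemma inner_transpose:
  fixes A :: "real^'n^'n"
  shows "x \<bullet> (transpose A *v y) = y \<bullet> (A *v x)"
  by (metis inner_commute dot_lmul_matrix transpose_matrix_vector)

lemma quad:
  fixes A :: "real^'n^'n"
  shows "x \<bullet> ((mat 1 - A_alpha a A) *v x) = x \<bullet> x - x \<bullet> (A *v x)"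
  unfolding L_mult inner_diff_right inner_scaleR_right inner_transpose[of x A x] by algebra

lemma Q_formula:
  fixes A :: "real^'n^'n"
  assumes pw: "pos_vec w" and aw: "A *v w = w" and atw: "transpose A *v w = w"
  shows "2 * (x \<bullet> x - x \<bullet> (A *v x)) =
     (\<Sum>i\<in>UNIV. \<Sum>j\<in>UNIV. A$i$j * w$i * w$j * (x$i/w$i - x$j/w$j)^2)"
proof -
  have wnz: "w$i \<noteq> 0" for i using pw unfolding pos_vec_def by (metis less_irrefl)
  have r1: "(\<Sum>j\<in>UNIV. A$i$j * w$j) = w$i" for i
    using aw by (simp add: vec_eq_iff matrix_vector_mult_def)
  have r2: "(\<Sum>i\<in>UNIV. A$i$j * w$i) = w$j" for j
    using atw by (simp add: vec_eq_iff matrix_vector_mult_def transpose_def mult.commute)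
  have e: "A$i$j * w$i * w$j * (x$i/w$i - x$j/w$j)^2
     = (x$i * x$i / w$i) * (A$i$j * w$j) + (x$j * x$j / w$j) * (A$i$j * w$i) - 2 * (x$i * (A$i$j * x$j))" for i j
    using wnz[of i] wnz[of j] by (simp add: field_simps power2_eq_square)
  have t1: "(\<Sum>i\<in>UNIV. \<Sum>j\<in>UNIV. (x$i * x$i / w$i) * (A$i$j * w$j)) = x \<bullet> x"
  proof -
    have "(\<Sum>j\<in>UNIV. (x$i * x$i / w$i) * (A$i$j * w$j)) = x$i * x$i" for i
      by (subst sum_distrib_left[symmetric]) (simp add: r1 wnz)
    then show ?thesis by (simp add: inner_vec_def)
  qed
  have t2: "(\<Sum>i\<in>UNIV. \<Sum>j\<in>UNIV. (x$j * x$j / w$j) * (A$i$j * w$i)) = x \<bullet> x"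
  proof -
    have "(\<Sum>i\<in>UNIV. (x$j * x$j / w$j) * (A$i$j * w$i)) = x$j * x$j" for j
      by (subst sum_distrib_left[symmetric]) (simp add: r2 wnz)
    then show ?thesis by (subst sum.swap) (simp add: inner_vec_def)
  qed
  have t3: "(\<Sum>i\<in>UNIV. \<Sum>j\<in>UNIV. x$i * (A$i$j * x$j)) = x \<bullet> (A *v x)"
    by (simp add: sum_distrib_left inner_vec_def matrix_vector_mult_def)
  have t4: "(\<Sum>i\<in>UNIV. \<Sum>j\<in>UNIV. 2 * (x$i * (A$i$j * x$j))) = 2 * (x \<bullet> (A *v x))"
    by (simp add: sum_distrib_left[symmetric] t3[symmetric])
  show ?thesis
    unfolding e sum_subtractf sum.distrib t1 t2 t4 by simp
qed

lemma Q_nonneg: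
  fixes A :: "real^'n^'n"
  assumes nn: "nonneg_mat A" and pw: "pos_vec w" and aw: "A *v w = w" and atw: "transpose A *v w = w"
  shows "0 \<le> x \<bullet> x - x \<bullet> (A *v x)"
proof -
  have "0 \<le> (\<Sum>i\<in>UNIV. \<Sum>j\<in>UNIV. A$i$j * w$i * w$j * (x$i/w$i - x$j/w$j)^2)"
    using nn pw unfolding nonneg_mat_def pos_vec_def
    by (intro sum_nonneg mult_nonneg_nonneg) (auto simp: less_imp_le)
  then have "0 \<le> 2 * (x \<bullet> x - x \<bullet> (A *v x))"
    unfolding Q_formula[OF pw aw atw, of x] .
  then show ?thesis by simp
qed

lemma Q_zero:
  fixes A :: "real^'n^'n"
  assumes nn: "nonneg_mat A" and irr: "irreducible_mat A"
    and pw: "pos_vec w" and aw: "A *v w = w" and atw: "transpose A *v w = w"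
    and q0: "x \<bullet> x - x \<bullet> (A *v x) = 0" and xk: "x$k = 0"
  shows "x = 0"
proof -
  have tnn: "0 \<le> A$i$j * w$i * w$j * (x$i/w$i - x$j/w$j)^2" for i j
    using nn pw unfolding nonneg_mat_def pos_vec_def
    by (intro mult_nonneg_nonneg) (auto simp: less_imp_le)
  have "(\<Sum>i\<in>UNIV. \<Sum>j\<in>UNIV. A$i$j * w$i * w$j * (x$i/w$i - x$j/w$j)^2) = 0"
    using Q_formula[OF pw aw atw, of x] q0 by simp
  then have "\<forall>i\<in>UNIV. (\<Sum>j\<in>UNIV. A$i$j * w$i * w$j * (x$i/w$i - x$j/w$j)^2) = 0"
    by (subst sum_nonneg_eq_0_iff[symmetric]) (auto intro!: sum_nonneg tnn)
  then have z: "A$i$j * w$i * w$j * (x$i/w$i - x$j/w$j)^2 = 0" for i j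
    using sum_nonneg_eq_0_iff[of UNIV "\<lambda>j. A$i$j * w$i * w$j * (x$i/w$i - x$j/w$j)^2"] tnn
    by auto
  have wp: "w$i > 0" for i using pw unfolding pos_vec_def by auto
  have edge: "x$i/w$i = x$j/w$j" if "A$i$j \<noteq> 0" for i j
    using z[of i j] that wp[of i] wp[of j] by auto
  have "x$k/w$k = x$j/w$j" for j
  proof -
    have "(k, j) \<in> {(k, l). A$k$l \<noteq> 0}\<^sup>*" using irr unfolding irreducible_mat_def by blast
    then show ?thesis
    proof (induction rule: rtrancl_induct)
      case base then show ?case by simp
    next
      case (step y z) then show ?case using edge by auto
    qed
  qed
  then have "x$j = 0" for j using xk wp[of j] by (metis divide_eq_0_iff less_irrefl div_0)
  then show ?thesis by (simp add: vec_eq_iff)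
qed

lemma support_inner:
  fixes d v :: "real^'n"
  assumes "\<And>i. i \<in> U \<Longrightarrow> d$i = 0" and "\<And>i. i \<notin> U \<Longrightarrow> v$i = 0"
  shows "d \<bullet> v = 0"
  unfolding inner_vec_def using assms by (intro sum.neutral) auto

lemma unique_sol:
  fixes A :: "real^'n^'n"
  assumes nn: "nonneg_mat A" and irr: "irreducible_mat A"
    and pw: "pos_vec w" and aw: "A *v w = w" and atw: "transpose A *v w = w"
    and U: "U \<noteq> {}"
  shows "\<exists>!q::real^'n. (\<forall>i\<in>U. q$i = c i) \<and> (\<forall>i. i \<notin> U \<longrightarrow> ((mat 1 - A_alpha a A) *v q)$i = 0)"
proof -
  define L where "L = mat 1 - A_alpha a A"
  define T where "T = (\<lambda>v::real^'n. \<chi> i. if i \<in> U then v$i else (L *v v)$i)"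
  have z: "v = 0" if "T v = 0" for v
  proof -
    have a1: "i \<in> U \<Longrightarrow> v$i = 0" for i using arg_cong[OF that, of "\<lambda>u. u$i"]
      by (simp add: T_def)
    have a2: "i \<notin> U \<Longrightarrow> (L *v v)$i = 0" for i using arg_cong[OF that, of "\<lambda>u. u$i"]
      by (simp add: T_def)
    have "v \<bullet> (L *v v) = 0" by (rule support_inner[OF a1 a2])
    then have "v \<bullet> v - v \<bullet> (A *v v) = 0" unfolding L_def quad .
    moreover obtain k where "k \<in> U" using U by blast
    ultimately show ?thesis using Q_zero[OF nn irr pw aw atw] a1 by blast
  qed
  have lin: "linear T"
    by (rule linearI) (simp_all add: T_def vec_eq_iff matrix_vector_right_distrib matrix_vector_mult_scaleR)
  have "inj T"
  proof (rule injI)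
    fix x y assume "T x = T y"
    then have "T (x - y) = 0" using linear_diff[OF lin] by simp
    from z[OF this] show "x = y" by simp
  qed
  then have "surj T" using linear_injective_imp_surjective[OF lin] by blast
  then obtain q where q: "T q = (\<chi> i. if i \<in> U then c i else 0)" by (metis surjD)
  have P: "(\<forall>i\<in>U. q$i = c i) \<and> (\<forall>i. i \<notin> U \<longrightarrow> (L *v q)$i = 0)"
  proof (intro conjI allI ballI impI)
    fix i show "i \<in> U \<Longrightarrow> q$i = c i" using arg_cong[OF q, of "\<lambda>u. u$i"] by (simp add: T_def)
    show "i \<notin> U \<Longrightarrow> (L *v q)$i = 0" using arg_cong[OF q, of "\<lambda>u. u$i"] by (simp add: T_def)
  qed
  show ?thesis unfolding L_def[symmetric]
  proof (rule ex1I[of _ q])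
    show "(\<forall>i\<in>U. q$i = c i) \<and> (\<forall>i. i \<notin> U \<longrightarrow> (L *v q)$i = 0)" by (rule P)
  next
    fix y assume y: "(\<forall>i\<in>U. y$i = c i) \<and> (\<forall>i. i \<notin> U \<longrightarrow> (L *v y)$i = 0)"
    have "T (y - q) = 0" using y P
      by (simp add: T_def vec_eq_iff matrix_vector_mult_diff_distrib)
    from z[OF this] show "y = q" by simp
  qed
qed

theorem theorem1p5:
  fixes A :: "real^'n^'n" and w :: "real^'n" and U :: "'n set" and b :: "'n \<Rightarrow> real"
    and \<alpha> \<beta> :: real
  assumes "nonneg_mat A" and "irreducible_mat A" and "largest_eigenvalue_one A"
    and "pos_vec w" and "A *v w = w" and "transpose A *v w = w"
    and "U \<noteq> {}" and "U \<noteq> UNIV"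
    and "0 \<le> \<beta>" and "\<beta> \<le> \<alpha>" and "\<alpha> \<le> 1/2"
  shows "cap U b w (A_alpha \<alpha> A) \<le> cap U b w (A_alpha \<beta> A)"
proof (cases "\<alpha> = \<beta>")
  case True then show ?thesis by simp
next
  case False
  then have ab: "\<beta> < \<alpha>" using assms(10) by simp
  define P where "P = (\<lambda>a (q::real^'n). (\<forall>i\<in>U. q$i = w$i * b i) \<and>
      (\<forall>i. i \<notin> U \<longrightarrow> ((mat 1 - A_alpha a A) *v q)$i = 0))"
  have ex: "\<exists>!q. P a q" for a unfolding P_def
    by (rule unique_sol[OF assms(1,2,4,5,6,7)])
  define q1 where "q1 = (THE q. P \<alpha> q)"
  define q2 where "q2 = (THE q. P \<beta> q)"
  have P1: "P \<alpha> q1" unfolding q1_def by (rule theI'[OF ex])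
  have P2: "P \<beta> q2" unfolding q2_def by (rule theI'[OF ex])
  have c1: "cap U b w (A_alpha \<alpha> A) = q1 \<bullet> ((mat 1 - A_alpha \<alpha> A) *v q1)"
    unfolding cap_def Let_def q1_def P_def ..
  have c2: "cap U b w (A_alpha \<beta> A) = q2 \<bullet> ((mat 1 - A_alpha \<beta> A) *v q2)"
    unfolding cap_def Let_def q2_def P_def ..
  define d where "d = q2 - q1"
  have dU: "i \<in> U \<Longrightarrow> d$i = 0" for i using P1 P2 unfolding P_def d_def by simp
  have E1: "d \<bullet> ((mat 1 - A_alpha \<alpha> A) *v q1) = 0"
    by (rule support_inner[OF dU]) (use P1 in \<open>auto simp: P_def\<close>)
  have E2: "d \<bullet> ((mat 1 - A_alpha \<beta> A) *v q2) = 0"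
    by (rule support_inner[OF dU]) (use P2 in \<open>auto simp: P_def\<close>)
  have q2e: "q2 = q1 + d" unfolding d_def by simp
  have Sd: "0 \<le> d \<bullet> d - d \<bullet> (A *v d)" by (rule Q_nonneg[OF assms(1,4,5,6)])
  define n1d where "n1d = q1 \<bullet> d"
  define ndd where "ndd = d \<bullet> d"
  define a1d where "a1d = q1 \<bullet> (A *v d)"
  define ad1 where "ad1 = d \<bullet> (A *v q1)"
  define add where "add = d \<bullet> (A *v d)"
  have E1': "n1d - \<alpha> * ad1 - (1-\<alpha>) * a1d = 0"
    using E1 unfolding L_mult inner_diff_right inner_scaleR_right inner_transpose
      n1d_def ad1_def a1d_def by (simp add: inner_commute)
  have E2': "n1d + ndd - \<beta> * (ad1 + add) - (1-\<beta>) * (a1d + add) = 0"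
    using E2 unfolding q2e L_mult inner_diff_right inner_scaleR_right inner_transpose
      matrix_vector_right_distrib inner_add_left inner_add_right
      n1d_def ad1_def a1d_def ndd_def add_def by (simp add: inner_commute algebra_simps)
  have D: "q2 \<bullet> ((mat 1 - A_alpha \<beta> A) *v q2) - q1 \<bullet> ((mat 1 - A_alpha \<alpha> A) *v q1)
      = 2 * n1d - a1d - ad1 + ndd - add"
    unfolding quad unfolding q2e matrix_vector_right_distrib inner_add_left inner_add_right
      n1d_def ad1_def a1d_def ndd_def add_def by (simp add: inner_commute)
  have Sd': "0 \<le> ndd - add" using Sd unfolding ndd_def add_def .
  have iden: "(\<alpha> - \<beta>) * (2 * n1d - a1d - ad1 + ndd - add)
     = (1 - \<alpha> - \<beta>) * (ndd - add) + (1 - 2*\<beta>) * (n1d - \<alpha> * ad1 - (1-\<alpha>) * a1d)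
       + (2*\<alpha> - 1) * (n1d + ndd - \<beta> * (ad1 + add) - (1-\<beta>) * (a1d + add))"
    by (simp add: algebra_simps)
  have "0 \<le> (\<alpha> - \<beta>) * (2 * n1d - a1d - ad1 + ndd - add)"
    unfolding iden E1' E2' using Sd' assms(9,10,11) by simp
  then have "0 \<le> 2 * n1d - a1d - ad1 + ndd - add"
    using ab by (simp add: zero_le_mult_iff)
  then show ?thesis unfolding c1 c2 using D by linarith
qed

end
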